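(* For every integer $k\ge 3$ there exist a finite connected graph $G$ and an isometric subgraph $H$ of $G$ such that $c(H)=1$, but $H$ is not $k$-guardable in $G$ (i.e., $k$ cops cannot guard $H$ in $G$).
   Context: All graphs are finite, simple and connected. A subgraph $H$ of $G$ is isometric if $d_H(x,y)=d_G(x,y)$ for all $x,y\in V(H)$. Cops and robber game on $G$: the cops first choose starting vertices, then the robber; then they alternate turns, each player moving each piece to an adjacent vertex or staying; a capture occurs when a cop occupies the robber's vertex. The cop number $c(H)$ is the minimum number of cops that can guarantee capture on $H$. For an isometric subgraph $H$ of $G$ and $k\ge1$, $H$ is $k$-guardable in $G$ if $k$ cops have a strategy such that after finitely many moves the $k$ cops are on vertices of $H$ and from then on always stay in $H$, and whenever the robber enters $H$ he is captured by one of these cops in the next turn. *)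

theory Defs
  imports Main
begin

definition walk :: "('v \<Rightarrow> 'v \<Rightarrow> bool) \<Rightarrow> 'v list \<Rightarrow> bool" where
  "walk E xs \<longleftrightarrow> (\<forall>i. Suc i < length xs \<longrightarrow> E (xs ! i) (xs ! Suc i))"

definition is_path_between :: "'v set \<Rightarrow> ('v \<Rightarrow> 'v \<Rightarrow> bool) \<Rightarrow> 'v \<Rightarrow> 'v \<Rightarrow> 'v list \<Rightarrow> bool" where
  "is_path_between V E x y xs \<longleftrightarrow>
     xs \<noteq> [] \<and> hd xs = x \<and> last xs = y \<and> set xs \<subseteq> V \<and> walk E xs"

definition connected_graph :: "'v set \<Rightarrow> ('v \<Rightarrow> 'v \<Rightarrow> bool) \<Rightarrow> bool" where
  "connected_graph V E \<longleftrightarrow>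
     finite V \<and> V \<noteq> {} \<and>
     (\<forall>x y. E x y \<longrightarrow> x \<in> V \<and> y \<in> V \<and> x \<noteq> y \<and> E y x) \<and>
     (\<forall>x\<in>V. \<forall>y\<in>V. \<exists>xs. is_path_between V E x y xs)"

definition gdist :: "'v set \<Rightarrow> ('v \<Rightarrow> 'v \<Rightarrow> bool) \<Rightarrow> 'v \<Rightarrow> 'v \<Rightarrow> nat" where
  "gdist V E x y = (LEAST n. \<exists>xs. is_path_between V E x y xs \<and> length xs = Suc n)"

definition subgraph :: "'v set \<Rightarrow> ('v \<Rightarrow> 'v \<Rightarrow> bool) \<Rightarrow> 'v set \<Rightarrow> ('v \<Rightarrow> 'v \<Rightarrow> bool) \<Rightarrow> bool" where
  "subgraph V E VH EH \<longleftrightarrow> VH \<subseteq> V \<and> (\<forall>x y. EH x y \<longrightarrow> E x y)"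

definition isometric_subgraph :: "'v set \<Rightarrow> ('v \<Rightarrow> 'v \<Rightarrow> bool) \<Rightarrow> 'v set \<Rightarrow> ('v \<Rightarrow> 'v \<Rightarrow> bool) \<Rightarrow> bool" where
  "isometric_subgraph V E VH EH \<longleftrightarrow>
     connected_graph VH EH \<and> subgraph V E VH EH \<and>
     (\<forall>x\<in>VH. \<forall>y\<in>VH. gdist VH EH x y = gdist V E x y)"

text \<open>A deterministic strategy for k cops is a function S
  mapping the robber's history [r_0,...,r_(n-1)] to the cops' positions C_n
  (a list of length k); C_0 = S [] is the initial placement.  The robber's play is
  an arbitrary sequence r with r_0 in V and each step staying or moving along an edge
  (r_n is chosen knowing C_0..C_n; since S is deterministic, quantifying over all
  such sequences is the same as quantifying over all robber strategies).\<close>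

definition legal_cop_strategy :: "'v set \<Rightarrow> ('v \<Rightarrow> 'v \<Rightarrow> bool) \<Rightarrow> nat \<Rightarrow> ('v list \<Rightarrow> 'v list) \<Rightarrow> bool" where
  "legal_cop_strategy V E k S \<longleftrightarrow>
     (\<forall>h. length (S h) = k \<and> set (S h) \<subseteq> V) \<and>
     (\<forall>h x i. i < k \<longrightarrow> S (h @ [x]) ! i = S h ! i \<or> E (S h ! i) (S (h @ [x]) ! i))"

definition robber_play :: "'v set \<Rightarrow> ('v \<Rightarrow> 'v \<Rightarrow> bool) \<Rightarrow> (nat \<Rightarrow> 'v) \<Rightarrow> bool" where
  "robber_play V E r \<longleftrightarrow> (\<forall>n. r n \<in> V) \<and> (\<forall>n. r (Suc n) = r n \<or> E (r n) (r (Suc n)))"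

definition cops_at :: "('v list \<Rightarrow> 'v list) \<Rightarrow> (nat \<Rightarrow> 'v) \<Rightarrow> nat \<Rightarrow> 'v list" where
  "cops_at S r n = S (map r [0..<n])"

text \<open>Capture in round n: the robber, placed/moved to r_n, lands on a cop (C_n),
  or a cop moves onto him in the cops' next move (C_(n+1)).\<close>
definition captured_at :: "('v list \<Rightarrow> 'v list) \<Rightarrow> (nat \<Rightarrow> 'v) \<Rightarrow> nat \<Rightarrow> bool" where
  "captured_at S r n \<longleftrightarrow> r n \<in> set (cops_at S r n) \<or> r n \<in> set (cops_at S r (Suc n))"

definition cops_win :: "'v set \<Rightarrow> ('v \<Rightarrow> 'v \<Rightarrow> bool) \<Rightarrow> nat \<Rightarrow> bool" where
  "cops_win V E k \<longleftrightarrow>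
     (\<exists>S. legal_cop_strategy V E k S \<and>
          (\<forall>r. robber_play V E r \<longrightarrow> (\<exists>n. captured_at S r n)))"

definition cop_number :: "'v set \<Rightarrow> ('v \<Rightarrow> 'v \<Rightarrow> bool) \<Rightarrow> nat" where
  "cop_number V E = (LEAST k. cops_win V E k)"

definition guardable :: "'v set \<Rightarrow> ('v \<Rightarrow> 'v \<Rightarrow> bool) \<Rightarrow> 'v set \<Rightarrow> ('v \<Rightarrow> 'v \<Rightarrow> bool) \<Rightarrow> nat \<Rightarrow> bool" where
  "guardable V E VH EH k \<longleftrightarrow>
     (\<exists>S. legal_cop_strategy V E k S \<and>
          (\<forall>r. robber_play V E r \<longrightarrow>
             (\<exists>N. \<forall>n\<ge>N. (\<forall>m<n. \<not> captured_at S r m) \<longrightarrow>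
                   set (cops_at S r n) \<subseteq> VH \<and>
                   (r n \<in> VH \<longrightarrow> r n \<in> set (cops_at S r (Suc n))))))"

end

theory Submission
  imports Defs "HOL-Library.Nat_Bijection"
begin

lemma walk_Nil[simp]: "walk E []" and walk_single[simp]: "walk E [a]"
  by (auto simp: walk_def)

lemma walk_Cons2[simp]: "walk E (a # b # xs) \<longleftrightarrow> E a b \<and> walk E (b # xs)"
proof
  assume "walk E (a # b # xs)"
  then show "E a b \<and> walk E (b # xs)"
    unfolding walk_def by (metis Suc_less_eq length_Cons nth_Cons_0 nth_Cons_Suc zero_less_Suc)
next
  assume h: "E a b \<and> walk E (b # xs)"
  show "walk E (a # b # xs)" unfolding walk_def
  proof (intro allI impI)
    fix i assume "Suc i < length (a # b # xs)"
    then show "E ((a # b # xs) ! i) ((a # b # xs) ! Suc i)"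
      using h unfolding walk_def by (cases i) auto
  qed
qed

lemma path_snoc:
  assumes "is_path_between V E x y xs" "E y z" "z \<in> V"
  shows "is_path_between V E x z (xs @ [z])"
proof -
  have w: "walk E xs" and ne: "xs \<noteq> []" and l: "last xs = y" using assms unfolding is_path_between_def by auto
  have "walk E (xs @ [z])" unfolding walk_def
  proof (intro allI impI)
    fix i assume i: "Suc i < length (xs @ [z])"
    show "E ((xs @ [z]) ! i) ((xs @ [z]) ! Suc i)"
    proof (cases "Suc i < length xs")
      case True then show ?thesis using w unfolding walk_def by (simp add: nth_append)
    next
      case False
      then have "i = length xs - 1" using i by auto
      then show ?thesis using ne l assms(2) by (simp add: nth_append last_conv_nth)
    qed
  qed
  then show ?thesis using assms unfolding is_path_between_def by auto
qed

lemma rtr_path: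
  assumes "(\<lambda>u v. E u v \<and> u \<in> V \<and> v \<in> V)\<^sup>*\<^sup>* x y" "x \<in> V"
  shows "\<exists>xs. is_path_between V E x y xs"
  using assms
proof (induction rule: rtranclp_induct)
  case base
  then show ?case by (intro exI[of _ "[x]"]) (simp add: is_path_between_def)
next
  case (step y z)
  then obtain xs where "is_path_between V E x y xs" by blast
  then have "is_path_between V E x z (xs @ [z])" using step.hyps(2) by (intro path_snoc) auto
  then show ?case by blast
qed

lemma conn_hub:
  assumes "finite V" "hub \<in> V"
    "\<forall>x y. E x y \<longrightarrow> x \<in> V \<and> y \<in> V \<and> x \<noteq> y \<and> E y x"
    "\<forall>x\<in>V. (\<lambda>u v. E u v \<and> u \<in> V \<and> v \<in> V)\<^sup>*\<^sup>* x hub"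
  shows "connected_graph V E"
proof -
  let ?R = "\<lambda>u v. E u v \<and> u \<in> V \<and> v \<in> V"
  have sym: "?R\<inverse>\<inverse> = ?R" using assms(3) by (auto simp: fun_eq_iff)
  have "\<forall>x\<in>V. \<forall>y\<in>V. \<exists>xs. is_path_between V E x y xs"
  proof (intro ballI)
    fix x y assume "x \<in> V" "y \<in> V"
    have "?R\<^sup>*\<^sup>* y hub" using assms(4) \<open>y \<in> V\<close> by blast
    then have "?R\<inverse>\<inverse>\<^sup>*\<^sup>* hub y" by (rule rtranclp_converseI)
    then have "?R\<^sup>*\<^sup>* hub y" using sym by simp
    then have "?R\<^sup>*\<^sup>* x y" using assms(4) \<open>x \<in> V\<close> by (meson rtranclp_trans)
    then show "\<exists>xs. is_path_between V E x y xs" using rtr_path \<open>x \<in> V\<close> by fast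
  qed
  then show ?thesis using assms unfolding connected_graph_def by auto
qed

lemma path_len1: "is_path_between V E x y [a] \<Longrightarrow> x = y"
  by (auto simp: is_path_between_def)
lemma path_len2: "is_path_between V E x y [a, b] \<Longrightarrow> E x y"
  by (auto simp: is_path_between_def)

lemma gdist_0: "x \<in> V \<Longrightarrow> gdist V E x x = 0"
  unfolding gdist_def
  by (rule Least_eq_0) (auto intro!: exI[of _ "[x]"] simp: is_path_between_def)

lemma gdist_1: assumes "x \<in> V" "y \<in> V" "E x y" "x \<noteq> y" shows "gdist V E x y = 1"
  unfolding gdist_def
proof (rule Least_equality)
  show "\<exists>xs. is_path_between V E x y xs \<and> length xs = Suc 1"
    using assms by (intro exI[of _ "[x,y]"]) (simp add: is_path_between_def)
next
  fix n assume "\<exists>xs. is_path_between V E x y xs \<and> length xs = Suc n"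
  then obtain xs where p: "is_path_between V E x y xs" "length xs = Suc n" by blast
  show "1 \<le> n"
  proof (rule ccontr)
    assume "\<not> 1 \<le> n" then have "n = 0" by simp
    then obtain a where "xs = [a]" using p(2) by (auto simp: length_Suc_conv)
    then show False using p(1) path_len1 assms(4) by fast
  qed
qed

lemma gdist_2: assumes "x \<in> V" "y \<in> V" "z \<in> V" "E x z" "E z y" "\<not> E x y" "x \<noteq> y"
  shows "gdist V E x y = 2"
  unfolding gdist_def
proof (rule Least_equality)
  show "\<exists>xs. is_path_between V E x y xs \<and> length xs = Suc 2"
    using assms by (intro exI[of _ "[x,z,y]"]) (simp add: is_path_between_def)
next
  fix n assume "\<exists>xs. is_path_between V E x y xs \<and> length xs = Suc n"
  then obtain xs where p: "is_path_between V E x y xs" "length xs = Suc n" by blast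
  show "2 \<le> n"
  proof (rule ccontr)
    assume "\<not> 2 \<le> n" then have "n = 0 \<or> n = 1" by auto
    then show False
    proof
      assume "n = 0"
      then obtain a where "xs = [a]" using p(2) by (auto simp: length_Suc_conv)
      then show False using p(1) path_len1 assms(7) by fast
    next
      assume "n = 1"
      then obtain a b where "xs = [a, b]" using p(2) by (auto simp: length_Suc_conv numeral_2_eq_2)
      then show False using p(1) path_len2 assms(6) by fast
    qed
  qed
qed


definition safe :: "('v \<Rightarrow> 'v \<Rightarrow> bool) \<Rightarrow> 'v list \<Rightarrow> 'v \<Rightarrow> bool" where
  "safe E C x \<longleftrightarrow> (\<forall>c\<in>set C. c \<noteq> x \<and> \<not> E c x)"

lemma legal_moved_ne:
  assumes leg: "legal_cop_strategy V E k S" and s: "safe E (S h) x"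
  shows "\<forall>c\<in>set (S (h @ [y])). c \<noteq> x"
proof
  fix c assume "c \<in> set (S (h @ [y]))"
  then obtain i where i: "i < length (S (h @ [y]))" "c = S (h @ [y]) ! i" by (auto simp: in_set_conv_nth)
  have lk: "length (S (h @ [y])) = k" "length (S h) = k" using leg unfolding legal_cop_strategy_def by auto
  have "S (h @ [y]) ! i = S h ! i \<or> E (S h ! i) (S (h @ [y]) ! i)"
    using leg i lk unfolding legal_cop_strategy_def by auto
  moreover have "S h ! i \<in> set (S h)" using i lk by auto
  ultimately show "c \<noteq> x" using s i unfolding safe_def by auto
qed

lemma robber_wins:
  assumes VRV: "VR \<subseteq> V" and VPV: "VP \<subseteq> V" and VPH: "VP \<subseteq> VH"
    and init: "\<And>C. length C = k \<Longrightarrow> \<exists>w\<in>VR. w \<notin> set C"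
    and stepR: "\<And>w C. w \<in> VR \<Longrightarrow> length C = k \<Longrightarrow> (\<forall>c\<in>set C. c \<noteq> w) \<Longrightarrow> \<exists>v\<in>VP. E w v \<and> safe E C v"
    and stepP: "\<And>v C. v \<in> VP \<Longrightarrow> length C = k \<Longrightarrow> (\<forall>c\<in>set C. c \<noteq> v) \<Longrightarrow> \<exists>w\<in>VR. E v w \<and> safe E C w"
  shows "\<not> guardable V E VH EH k"
proof
  assume "guardable V E VH EH k"
  then obtain S where leg: "legal_cop_strategy V E k S" and
    G: "\<And>r. robber_play V E r \<Longrightarrow> (\<exists>N. \<forall>n\<ge>N. (\<forall>m<n. \<not> captured_at S r m) \<longrightarrow>
                   set (cops_at S r n) \<subseteq> VH \<and>
                   (r n \<in> VH \<longrightarrow> r n \<in> set (cops_at S r (Suc n))))"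
    unfolding guardable_def by blast
  have len: "\<And>h. length (S h) = k" using leg unfolding legal_cop_strategy_def by auto
  define nxt where "nxt h = (if h = [] then (SOME v. v \<in> VP \<and> safe E (S []) v)
      else if even (length h) then (SOME v. v \<in> VP \<and> E (last h) v \<and> safe E (S h) v)
      else (SOME v. v \<in> VR \<and> E (last h) v \<and> safe E (S h) v))" for h
  define hist where "hist n = rec_nat [] (\<lambda>_ h. h @ [nxt h]) n" for n
  have hist0: "hist 0 = []" and histS: "\<And>n. hist (Suc n) = hist n @ [nxt (hist n)]"
    by (simp_all add: hist_def)
  define r where "r n = nxt (hist n)" for n
  have lenh: "length (hist n) = n" for n by (induction n) (simp_all add: hist0 histS)
  have mh: "map r [0..<n] = hist n" for n by (induction n) (simp_all add: hist0 histS r_def)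
  have inv: "(even n \<longrightarrow> r n \<in> VP) \<and> (odd n \<longrightarrow> r n \<in> VR) \<and> safe E (S (hist n)) (r n)
     \<and> (n > 0 \<longrightarrow> E (r (n - 1)) (r n))" for n
  proof (induction n)
    case 0
    obtain w where w: "w \<in> VR" "w \<notin> set (S [])" using init len by blast
    then have "\<forall>c\<in>set (S []). c \<noteq> w" by auto
    then obtain v where "v \<in> VP \<and> safe E (S []) v" using stepR[OF w(1) len] by blast
    then have "r 0 \<in> VP \<and> safe E (S []) (r 0)" unfolding r_def hist0 nxt_def by simp (rule someI)
    then show ?case by (simp add: hist0)
  next
    case (Suc n)
    have ne: "\<forall>c\<in>set (S (hist (Suc n))). c \<noteq> r n"
      using legal_moved_ne[OF leg] Suc.IH unfolding histS r_def by blast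
    have hl: "last (hist (Suc n)) = r n" "hist (Suc n) \<noteq> []" by (simp_all add: histS r_def)
    show ?case
    proof (cases "even (Suc n)")
      case True
      then have "r n \<in> VR" using Suc.IH by auto
      then obtain v where "v \<in> VP \<and> E (r n) v \<and> safe E (S (hist (Suc n))) v"
        using stepR[OF _ len ne] by blast
      then have "r (Suc n) \<in> VP \<and> E (r n) (r (Suc n)) \<and> safe E (S (hist (Suc n))) (r (Suc n))"
        unfolding r_def[of "Suc n"] nxt_def[of "hist (Suc n)"] using True hl lenh by simp (rule someI)
      then show ?thesis using True by simp
    next
      case False
      then have "r n \<in> VP" using Suc.IH by auto
      then obtain v where "v \<in> VR \<and> E (r n) v \<and> safe E (S (hist (Suc n))) v"
        using stepP[OF _ len ne] by blast
      then have "r (Suc n) \<in> VR \<and> E (r n) (r (Suc n)) \<and> safe E (S (hist (Suc n))) (r (Suc n))"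
        unfolding r_def[of "Suc n"] nxt_def[of "hist (Suc n)"] using False hl lenh by simp (rule someI)
      then show ?thesis using False by simp
    qed
  qed
  have inV: "r n \<in> V" for n using inv[of n] VRV VPV by (cases "even n") auto
  have play: "robber_play V E r" unfolding robber_play_def
    using inV inv by (metis diff_Suc_1 zero_less_Suc)
  have nocap: "\<not> captured_at S r m" for m
  proof -
    have "r m \<notin> set (S (hist m))" using inv[of m] unfolding safe_def by blast
    moreover have "r m \<notin> set (S (hist (Suc m)))"
      using legal_moved_ne[OF leg, of "hist m" "r m" "r m"] inv[of m] unfolding histS r_def by blast
    ultimately show ?thesis unfolding captured_at_def cops_at_def mh by simp
  qed
  obtain N where HN: "\<forall>n\<ge>N. (\<forall>m<n. \<not> captured_at S r m) \<longrightarrow>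
                   set (cops_at S r n) \<subseteq> VH \<and> (r n \<in> VH \<longrightarrow> r n \<in> set (cops_at S r (Suc n)))"
    using G[OF play] by blast
  have "r (2*N) \<in> VH" using inv[of "2*N"] VPH by auto
  moreover have "r (2*N) \<notin> set (cops_at S r (Suc (2*N)))"
    using nocap unfolding captured_at_def by blast
  ultimately show False using HN nocap by (metis le_add2 mult_2)
qed

lemma cop_number_one:
  assumes mz: "mz \<in> M" and MH: "M \<subseteq> VH"
    and clique: "\<And>x y. x \<in> M \<Longrightarrow> y \<in> M \<Longrightarrow> x \<noteq> y \<Longrightarrow> EH x y"
    and outg: "\<And>v. v \<in> VH \<Longrightarrow> v \<notin> M \<Longrightarrow> g v \<in> M \<and> EH (g v) v"
    and nbr: "\<And>v u. v \<in> VH \<Longrightarrow> v \<notin> M \<Longrightarrow> EH v u \<Longrightarrow> u \<in> M"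
    and EHV: "\<And>u v. EH u v \<Longrightarrow> u \<in> VH \<and> v \<in> VH"
  shows "cop_number VH EH = 1"
proof -
  define f where "f c x = (if c \<in> M then (if x = c \<or> EH c x then x else if x \<in> VH then g x else c) else c)" for c x
  define S where "S h = [foldl f mz h]" for h
  have fV: "c \<in> VH \<Longrightarrow> f c x \<in> VH" for c x
  proof -
    assume c: "c \<in> VH"
    { assume "x \<in> VH" "\<not> (x = c \<or> EH c x)" "c \<in> M"
      then have "x \<notin> M" using clique by blast
      then have "g x \<in> VH" using outg MH \<open>x \<in> VH\<close> by blast }
    then show ?thesis using c EHV unfolding f_def by auto
  qed
  have posV: "foldl f mz h \<in> VH" for h
  proof (induction h rule: rev_induct)
    case Nil then show ?case using mz MH by auto
  next
    case (snoc x xs) then show ?case using fV by simp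
  qed
  have fmove: "f c x = c \<or> EH c (f c x)" for c x
  proof -
    { assume c: "c \<in> M" and x: "\<not> (x = c \<or> EH c x)" "x \<in> VH"
      then have "x \<notin> M" using clique by blast
      then have "g x \<in> M" using outg x by blast
      then have "g x = c \<or> EH c (g x)" using clique c by blast }
    then show ?thesis unfolding f_def by auto
  qed
  have leg: "legal_cop_strategy VH EH 1 S"
    unfolding legal_cop_strategy_def S_def using posV fmove by auto
  have win: "cops_win VH EH 1"
    unfolding cops_win_def
  proof (rule exI[of _ S], intro conjI allI impI)
    show "legal_cop_strategy VH EH 1 S" by (rule leg)
    fix r assume play: "robber_play VH EH r"
    define c where "c n = foldl f mz (map r [0..<n])" for n
    have ca: "cops_at S r n = [c n]" for n unfolding cops_at_def S_def c_def by simp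
    have cS: "c (Suc n) = f (c n) (r n)" for n unfolding c_def by simp
    have key: "c n \<in> M \<Longrightarrow> (r n = c n \<or> EH (c n) (r n)) \<Longrightarrow> captured_at S r n" for n
      unfolding captured_at_def ca cS f_def by auto
    have rV: "r n \<in> VH" for n using play unfolding robber_play_def by auto
    have c0: "c 0 = mz" unfolding c_def by simp
    show "\<exists>n. captured_at S r n"
    proof (cases "r 0 = c 0 \<or> EH (c 0) (r 0)")
      case True then show ?thesis using key[of 0] c0 mz by auto
    next
      case False
      then have r0M: "r 0 \<notin> M" using clique c0 mz by metis
      have c1: "c 1 = g (r 0)" using cS[of 0] False c0 mz rV unfolding f_def by auto
      have gM: "g (r 0) \<in> M" "EH (g (r 0)) (r 0)" using outg rV r0M by auto
      have "r 1 = r 0 \<or> EH (r 0) (r 1)" using play unfolding robber_play_def by (metis One_nat_def)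
      then have "r 1 = c 1 \<or> EH (c 1) (r 1)"
      proof
        assume "r 1 = r 0" then show ?thesis using gM(2) c1 by simp
      next
        assume "EH (r 0) (r 1)"
        then have r1: "r 1 \<in> M" by (rule nbr[OF rV r0M])
        show ?thesis
        proof (cases "r 1 = g (r 0)")
          case True then show ?thesis using c1 by simp
        next
          case False then show ?thesis using clique[OF gM(1) r1] c1 by simp
        qed
      qed
      moreover have "c 1 \<in> M" using c1 gM by simp
      ultimately show ?thesis using key[of 1] by blast
    qed
  qed
  have nowin0: "\<not> cops_win VH EH 0"
  proof
    assume "cops_win VH EH 0"
    then obtain S' where l: "legal_cop_strategy VH EH 0 S'" and
      w: "\<forall>r. robber_play VH EH r \<longrightarrow> (\<exists>n. captured_at S' r n)" unfolding cops_win_def by blast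
    have "robber_play VH EH (\<lambda>_. mz)" unfolding robber_play_def using mz MH by auto
    then obtain n where "captured_at S' (\<lambda>_. mz) n" using w by blast
    moreover have "S' h = []" for h using l unfolding legal_cop_strategy_def by auto
    ultimately show False unfolding captured_at_def cops_at_def by simp
  qed
  show ?thesis unfolding cop_number_def
  proof (rule Least_equality)
    show "cops_win VH EH 1" by (rule win)
    fix y assume "cops_win VH EH y" then show "1 \<le> y" using nowin0 by (cases y) auto
  qed
qed


definition Nm :: "nat \<Rightarrow> nat" where "Nm k = 2*k*k + 1"
definition P :: "nat \<Rightarrow> nat \<Rightarrow> nat" where "P x y = 3 * prod_encode (x, y)"
definition Lx :: "nat \<Rightarrow> nat \<Rightarrow> nat" where "Lx a b = Suc (3 * prod_encode (a, b))"
definition Mv :: "nat \<Rightarrow> nat \<Rightarrow> nat" where "Mv p q = Suc (Suc (3 * prod_encode (p, q)))"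

lemma P_eq[simp]: "P x y = P x' y' \<longleftrightarrow> x = x' \<and> y = y'"
  unfolding P_def by (simp add: prod_encode_eq)
lemma Lx_eq[simp]: "Lx x y = Lx x' y' \<longleftrightarrow> x = x' \<and> y = y'"
  unfolding Lx_def by (simp add: prod_encode_eq)
lemma Mv_eq[simp]: "Mv x y = Mv x' y' \<longleftrightarrow> x = x' \<and> y = y'"
  unfolding Mv_def by (simp add: prod_encode_eq)
lemma P_Lx[simp]: "P x y \<noteq> Lx a b" "Lx a b \<noteq> P x y" unfolding P_def Lx_def by presburger+
lemma P_Mv[simp]: "P x y \<noteq> Mv a b" "Mv a b \<noteq> P x y" unfolding P_def Mv_def by presburger+
lemma Lx_Mv[simp]: "Lx x y \<noteq> Mv a b" "Mv a b \<noteq> Lx x y" unfolding Lx_def Mv_def by presburger+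

definition Pts :: "nat \<Rightarrow> nat set" where "Pts k = {P x y | x y. x \<le> 2*k \<and> y < Nm k}"
definition Lns :: "nat \<Rightarrow> nat set" where "Lns k = {Lx a b | a b. a \<le> k \<and> b < Nm k}"
definition Ms :: "nat \<Rightarrow> nat set" where "Ms k = {Mv p q | p q. p \<in> Pts k \<and> q \<in> Pts k \<and> p \<noteq> q}"

lemma mem_simps[simp]:
  "P x y \<in> Pts k \<longleftrightarrow> x \<le> 2*k \<and> y < Nm k"
  "Lx a b \<in> Lns k \<longleftrightarrow> a \<le> k \<and> b < Nm k"
  "Mv p q \<in> Ms k \<longleftrightarrow> p \<in> Pts k \<and> q \<in> Pts k \<and> p \<noteq> q"
  "P x y \<notin> Lns k" "P x y \<notin> Ms k" "Lx a b \<notin> Pts k" "Lx a b \<notin> Ms k"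
  "Mv p q \<notin> Pts k" "Mv p q \<notin> Lns k"
  unfolding Pts_def Lns_def Ms_def by auto

lemma Pts_E: "u \<in> Pts k \<Longrightarrow> (\<And>x y. u = P x y \<Longrightarrow> x \<le> 2*k \<Longrightarrow> y < Nm k \<Longrightarrow> Q) \<Longrightarrow> Q"
  unfolding Pts_def by auto
lemma Lns_E: "u \<in> Lns k \<Longrightarrow> (\<And>a b. u = Lx a b \<Longrightarrow> a \<le> k \<Longrightarrow> b < Nm k \<Longrightarrow> Q) \<Longrightarrow> Q"
  unfolding Lns_def by auto
lemma Ms_E: "u \<in> Ms k \<Longrightarrow> (\<And>p q. u = Mv p q \<Longrightarrow> p \<in> Pts k \<Longrightarrow> q \<in> Pts k \<Longrightarrow> p \<noteq> q \<Longrightarrow> Q) \<Longrightarrow> Q"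
  unfolding Ms_def by auto

lemma disj[simp]: "u \<in> Pts k \<Longrightarrow> u \<notin> Lns k" "u \<in> Pts k \<Longrightarrow> u \<notin> Ms k" "u \<in> Lns k \<Longrightarrow> u \<notin> Ms k"
  by (auto elim: Pts_E Lns_E)

lemma fin: "finite (Pts k)" "finite (Lns k)" "finite (Ms k)"
proof -
  have "Pts k \<subseteq> (\<lambda>(x,y). P x y) ` ({..2*k} \<times> {..<Nm k})" unfolding Pts_def by auto
  then show f1: "finite (Pts k)" by (rule finite_subset) auto
  have "Lns k \<subseteq> (\<lambda>(x,y). Lx x y) ` ({..k} \<times> {..<Nm k})" unfolding Lns_def by auto
  then show "finite (Lns k)" by (rule finite_subset) auto
  have "Ms k \<subseteq> (\<lambda>(x,y). Mv x y) ` (Pts k \<times> Pts k)" unfolding Ms_def by auto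
  then show "finite (Ms k)" by (rule finite_subset) (use f1 in auto)
qed

definition inc :: "nat \<Rightarrow> nat \<Rightarrow> nat \<Rightarrow> nat \<Rightarrow> nat \<Rightarrow> bool" where
  "inc k x y a b \<longleftrightarrow> int y = (int a * int x + int b) mod int (Nm k)"

definition GE :: "nat \<Rightarrow> nat \<Rightarrow> nat \<Rightarrow> bool" where
  "GE k u v \<longleftrightarrow>
    (\<exists>x y a b. u = P x y \<and> v = Lx a b \<and> x \<le> 2*k \<and> y < Nm k \<and> a \<le> k \<and> b < Nm k \<and> inc k x y a b) \<or>
    (\<exists>x y a b. v = P x y \<and> u = Lx a b \<and> x \<le> 2*k \<and> y < Nm k \<and> a \<le> k \<and> b < Nm k \<and> inc k x y a b) \<or>
    (u \<in> Pts k \<and> v \<in> Ms k \<and> (\<exists>q. v = Mv u q \<or> v = Mv q u)) \<or>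
    (v \<in> Pts k \<and> u \<in> Ms k \<and> (\<exists>q. u = Mv v q \<or> u = Mv q v)) \<or>
    (u \<in> Ms k \<and> v \<in> Ms k \<and> u \<noteq> v)"

definition VV :: "nat \<Rightarrow> nat set" where "VV k = Pts k \<union> Lns k \<union> Ms k"
definition VHH :: "nat \<Rightarrow> nat set" where "VHH k = Pts k \<union> Ms k"
definition GEH :: "nat \<Rightarrow> nat \<Rightarrow> nat \<Rightarrow> bool" where
  "GEH k u v \<longleftrightarrow> GE k u v \<and> u \<in> VHH k \<and> v \<in> VHH k"

lemma GE_simps[simp]:
  "GE k (P x y) (P x' y') = False"
  "GE k (P x y) (Lx a b) = (x \<le> 2*k \<and> y < Nm k \<and> a \<le> k \<and> b < Nm k \<and> inc k x y a b)"
  "GE k (Lx a b) (P x y) = (x \<le> 2*k \<and> y < Nm k \<and> a \<le> k \<and> b < Nm k \<and> inc k x y a b)"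
  "GE k (Lx a b) (Lx a' b') = False"
  "GE k (Lx a b) (Mv p q) = False"
  "GE k (Mv p q) (Lx a b) = False"
  "GE k (P x y) (Mv p q) = (P x y \<in> Pts k \<and> Mv p q \<in> Ms k \<and> (p = P x y \<or> q = P x y))"
  "GE k (Mv p q) (P x y) = (P x y \<in> Pts k \<and> Mv p q \<in> Ms k \<and> (p = P x y \<or> q = P x y))"
  "GE k (Mv p q) (Mv p' q') = (Mv p q \<in> Ms k \<and> Mv p' q' \<in> Ms k \<and> (p \<noteq> p' \<or> q \<noteq> q'))"
  unfolding GE_def by (auto simp del: mem_simps simp add: mem_simps(4-9))

lemma GE_V: "GE k u v \<Longrightarrow> u \<in> VV k \<and> v \<in> VV k"
  unfolding GE_def VV_def by auto

lemma V_cases: "u \<in> VV k \<Longrightarrow>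
   (\<And>x y. u = P x y \<Longrightarrow> x \<le> 2*k \<Longrightarrow> y < Nm k \<Longrightarrow> Q) \<Longrightarrow>
   (\<And>a b. u = Lx a b \<Longrightarrow> a \<le> k \<Longrightarrow> b < Nm k \<Longrightarrow> Q) \<Longrightarrow>
   (\<And>p q. u = Mv p q \<Longrightarrow> p \<in> Pts k \<Longrightarrow> q \<in> Pts k \<Longrightarrow> p \<noteq> q \<Longrightarrow> Q) \<Longrightarrow> Q"
  unfolding VV_def by (auto elim: Pts_E Lns_E Ms_E)

lemma GE_sym: "GE k u v \<Longrightarrow> GE k v u"
  unfolding GE_def by blast

lemma GE_irr: "GE k u v \<Longrightarrow> u \<noteq> v"
proof
  assume g: "GE k u v" and "u = v"
  then have "GE k u u" by simp
  moreover have "u \<in> VV k" using g GE_V by blast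
  ultimately show False by (elim V_cases) auto
qed


lemma core:
  assumes a: "a \<le> k" "a' \<le> k" and x: "x \<le> 2*k" "x' \<le> 2*k" and b: "b < Nm k" "b' < Nm k"
    and i1: "inc k x y a b" and i2: "inc k x y a' b'" and i3: "inc k x' y' a b" and i4: "inc k x' y' a' b'"
  shows "(x = x' \<and> y = y') \<or> (a = a' \<and> b = b')"
proof -
  define n where "n = int (Nm k)"
  have n: "n = 2 * int k * int k + 1" unfolding n_def Nm_def by simp
  have e1: "(int a * int x + int b) mod n = (int a' * int x + int b') mod n"
    using i1 i2 unfolding inc_def n_def by simp
  have e2: "(int a * int x' + int b) mod n = (int a' * int x' + int b') mod n"
    using i3 i4 unfolding inc_def n_def by simp
  have d1: "n dvd (int a * int x + int b) - (int a' * int x + int b')"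
    using e1 by (simp add: mod_eq_dvd_iff)
  have d2: "n dvd (int a * int x' + int b) - (int a' * int x' + int b')"
    using e2 by (simp add: mod_eq_dvd_iff)
  have "n dvd ((int a * int x + int b) - (int a' * int x + int b')) - ((int a * int x' + int b) - (int a' * int x' + int b'))"
    using d1 d2 by (rule dvd_diff)
  moreover have "((int a * int x + int b) - (int a' * int x + int b')) - ((int a * int x' + int b) - (int a' * int x' + int b'))
      = (int a - int a') * (int x - int x')" by (simp add: algebra_simps)
  ultimately have d: "n dvd (int a - int a') * (int x - int x')" by simp
  have "(int a - int a') * (int x - int x') = 0"
  proof (rule ccontr)
    assume nz: "(int a - int a') * (int x - int x') \<noteq> 0"
    have "\<bar>n\<bar> \<le> \<bar>(int a - int a') * (int x - int x')\<bar>" using dvd_imp_le_int[OF nz d] .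
    also have "\<dots> = \<bar>int a - int a'\<bar> * \<bar>int x - int x'\<bar>" by (simp add: abs_mult)
    also have "\<dots> \<le> int k * (2 * int k)"
      by (rule mult_mono) (use a x in auto)
    finally have "\<bar>n\<bar> \<le> int k * (2 * int k)" .
    moreover have "int k * (2 * int k) = 2 * int k * int k" by (simp add: algebra_simps)
    ultimately show False using n by linarith
  qed
  then have "a = a' \<or> x = x'" by simp
  then show ?thesis
  proof
    assume "x = x'"
    then have "y = y'" using i1 i3 unfolding inc_def by simp
    then show ?thesis using \<open>x = x'\<close> by simp
  next
    assume "a = a'"
    then have "n dvd int b - int b'" using d1 by simp
    moreover have "\<bar>int b - int b'\<bar> < n" using b unfolding n_def by auto
    ultimately have "int b - int b' = 0"
    proof -
      assume dv: "n dvd int b - int b'" and lt: "\<bar>int b - int b'\<bar> < n"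
      show ?thesis
      proof (rule ccontr)
        assume "int b - int b' \<noteq> 0"
        from dvd_imp_le_int[OF this dv] lt show False by linarith
      qed
    qed
    then show ?thesis using \<open>a = a'\<close> by simp
  qed
qed


lemma count_avoid:
  assumes "finite X" "card (set C) \<le> k" "\<And>c. c \<in> set C \<Longrightarrow> card (X \<inter> D c) \<le> t" "k * t < card X"
  shows "\<exists>x\<in>X. \<forall>c\<in>set C. x \<notin> D c"
proof (rule ccontr)
  assume "\<not> ?thesis"
  then have sub: "X \<subseteq> (\<Union>c\<in>set C. X \<inter> D c)" by blast
  have "card X \<le> card (\<Union>c\<in>set C. X \<inter> D c)"
  proof (rule card_mono[OF _ sub])
    show "finite (\<Union>c\<in>set C. X \<inter> D c)" using assms(1) by auto
  qed
  also have "\<dots> \<le> (\<Sum>c\<in>set C. card (X \<inter> D c))" by (rule card_UN_le) simp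
  also have "\<dots> \<le> card (set C) * t" using sum_bounded_above[of "set C" "\<lambda>c. card (X \<inter> D c)" t] assms(3) by simp
  also have "\<dots> \<le> k * t" using assms(2) by simp
  finally show False using assms(4) by simp
qed

lemma card_le2: "finite X \<Longrightarrow> X \<subseteq> {p, q} \<Longrightarrow> card X \<le> 2"
proof -
  assume "X \<subseteq> {p, q}"
  then have "card X \<le> card {p, q}" by (rule card_mono[rotated]) simp
  also have "card {p, q} \<le> 2" by (cases "p = q") simp_all
  finally show ?thesis .
qed

lemma card_le1: "finite X \<Longrightarrow> X \<subseteq> {p} \<Longrightarrow> card X \<le> 1"
proof -
  assume "X \<subseteq> {p}"
  then have "card X \<le> card {p}" by (rule card_mono[rotated]) simp
  then show ?thesis by simp
qed

lemma subsing: "(\<And>u v. u \<in> X \<Longrightarrow> v \<in> X \<Longrightarrow> u = v) \<Longrightarrow> \<exists>z. X \<subseteq> {z}"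
  by blast

lemma Nm_pos: "0 < Nm k" unfolding Nm_def by simp

lemma stepR:
  assumes w: "w \<in> Lns k" and len: "length C = k" and ne: "\<forall>c\<in>set C. c \<noteq> w"
  shows "\<exists>v\<in>Pts k. GE k w v \<and> safe (GE k) C v"
proof -
  obtain a b where wab: "w = Lx a b" "a \<le> k" "b < Nm k" using w by (elim Lns_E)
  define X where "X = {v \<in> Pts k. GE k w v}"
  define D where "D c = {v. v = c \<or> GE k c v}" for c
  have finX: "finite X" unfolding X_def using fin(1) by simp
  define f where "f x = P x (nat ((int a * int x + int b) mod int (Nm k)))" for x
  have fX: "f x \<in> X" if "x \<le> 2*k" for x
  proof -
    have nn: "0 \<le> (int a * int x + int b) mod int (Nm k)" "(int a * int x + int b) mod int (Nm k) < int (Nm k)"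
      using Nm_pos by simp_all
    then show ?thesis unfolding X_def f_def wab(1) using that wab nn
      by (simp add: inc_def nat_less_iff)
  qed
  have injf: "inj_on f {..2*k}" unfolding f_def inj_on_def by simp
  have "card (f ` {..2*k}) = 2*k+1" using card_image[OF injf] by simp
  moreover have "f ` {..2*k} \<subseteq> X" using fX by auto
  ultimately have cX: "2*k+1 \<le> card X" using card_mono[OF finX] by metis
  have cD: "card (X \<inter> D c) \<le> 2" if c: "c \<in> set C" for c
  proof -
    have "\<exists>p q. X \<inter> D c \<subseteq> {p, q}"
    proof (cases "c \<in> VV k")
      case False
      then have "X \<inter> D c \<subseteq> {c}" unfolding D_def using GE_V by blast
      then show ?thesis by blast
    next
      case True
      then show ?thesis
      proof (rule V_cases)
        fix x y assume "c = P x y"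
        then have "X \<inter> D c \<subseteq> {c}" unfolding X_def D_def by (auto elim!: Pts_E)
        then show ?thesis by blast
      next
        fix p q assume "c = Mv p q"
        then have "X \<inter> D c \<subseteq> {p, q}" unfolding X_def D_def by (auto elim!: Pts_E)
        then show ?thesis by blast
      next
        fix a' b' assume c': "c = Lx a' b'" "a' \<le> k" "b' < Nm k"
        have "\<exists>z. X \<inter> D c \<subseteq> {z}"
        proof (rule subsing)
          fix u v assume u: "u \<in> X \<inter> D c" and v: "v \<in> X \<inter> D c"
          obtain x1 y1 where u1: "u = P x1 y1" "x1 \<le> 2*k" "y1 < Nm k" using u unfolding X_def by (auto elim: Pts_E)
          obtain x2 y2 where v1: "v = P x2 y2" "x2 \<le> 2*k" "y2 < Nm k" using v unfolding X_def by (auto elim: Pts_E)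
          have "inc k x1 y1 a b" "inc k x2 y2 a b" "inc k x1 y1 a' b'" "inc k x2 y2 a' b'"
            using u v u1 v1 c' wab unfolding X_def D_def by auto
          moreover have "(a, b) \<noteq> (a', b')" using ne c c' wab by auto
          ultimately show "u = v" using core[of a k a' x1 x2 b b' y1 y2] u1 v1 c' wab by auto
        qed
        then show ?thesis by blast
      qed
    qed
    then obtain p q where "X \<inter> D c \<subseteq> {p, q}" by blast
    then show ?thesis by (intro card_le2) (use finX in auto)
  qed
  have "\<exists>v\<in>X. \<forall>c\<in>set C. v \<notin> D c"
  proof (rule count_avoid[OF finX _ cD])
    show "card (set C) \<le> k" using len card_length by metis
  qed (use cX in auto)
  then show ?thesis unfolding X_def D_def safe_def by auto
qed

lemma stepP:
  assumes v: "v \<in> Pts k" and len: "length C = k" and ne: "\<forall>c\<in>set C. c \<noteq> v"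
  shows "\<exists>w\<in>Lns k. GE k v w \<and> safe (GE k) C w"
proof -
  obtain x y where vxy: "v = P x y" "x \<le> 2*k" "y < Nm k" using v by (elim Pts_E)
  define X where "X = {w \<in> Lns k. GE k v w}"
  define D where "D c = {v. v = c \<or> GE k c v}" for c
  have finX: "finite X" unfolding X_def using fin(2) by simp
  define f where "f a = Lx a (nat ((int y - int a * int x) mod int (Nm k)))" for a
  have fX: "f a \<in> X" if "a \<le> k" for a
  proof -
    have nn: "0 \<le> (int y - int a * int x) mod int (Nm k)" "(int y - int a * int x) mod int (Nm k) < int (Nm k)"
      using Nm_pos by simp_all
    have "(int a * int x + (int y - int a * int x) mod int (Nm k)) mod int (Nm k) = int y mod int (Nm k)"
      by (simp add: mod_add_right_eq)
    also have "\<dots> = int y" using vxy by simp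
    finally have "inc k x y a (nat ((int y - int a * int x) mod int (Nm k)))"
      unfolding inc_def using nn by simp
    then show ?thesis unfolding X_def f_def vxy(1) using that vxy nn
      by (simp add: nat_less_iff)
  qed
  have injf: "inj_on f {..k}" unfolding f_def inj_on_def by simp
  have "card (f ` {..k}) = k+1" using card_image[OF injf] by simp
  moreover have "f ` {..k} \<subseteq> X" using fX by auto
  ultimately have cX: "k+1 \<le> card X" using card_mono[OF finX] by metis
  have cD: "card (X \<inter> D c) \<le> 1" if c: "c \<in> set C" for c
  proof -
    have "\<exists>p. X \<inter> D c \<subseteq> {p}"
    proof (cases "c \<in> VV k")
      case False
      then have "X \<inter> D c \<subseteq> {c}" unfolding D_def using GE_V by blast
      then show ?thesis by blast
    next
      case True
      then show ?thesis
      proof (rule V_cases)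
        fix a b assume "c = Lx a b"
        then have "X \<inter> D c \<subseteq> {c}" unfolding X_def D_def by (auto elim!: Lns_E)
        then show ?thesis by blast
      next
        fix p q assume "c = Mv p q"
        then have "X \<inter> D c \<subseteq> {c}" unfolding X_def D_def by (auto elim!: Lns_E)
        then show ?thesis by blast
      next
        fix x' y' assume c': "c = P x' y'" "x' \<le> 2*k" "y' < Nm k"
        show "\<exists>z. X \<inter> D c \<subseteq> {z}"
        proof (rule subsing)
          fix u w assume u: "u \<in> X \<inter> D c" and w: "w \<in> X \<inter> D c"
          obtain a1 b1 where u1: "u = Lx a1 b1" "a1 \<le> k" "b1 < Nm k" using u unfolding X_def by (auto elim: Lns_E)
          obtain a2 b2 where w1: "w = Lx a2 b2" "a2 \<le> k" "b2 < Nm k" using w unfolding X_def by (auto elim: Lns_E)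
          have "inc k x y a1 b1" "inc k x y a2 b2" "inc k x' y' a1 b1" "inc k x' y' a2 b2"
            using u w u1 w1 c' vxy unfolding X_def D_def by auto
          moreover have "(x, y) \<noteq> (x', y')" using ne c c' vxy by auto
          ultimately show "u = w" using core[of a1 k a2 x x' b1 b2 y y'] u1 w1 c' vxy by auto
        qed
      qed
    qed
    then obtain p where "X \<inter> D c \<subseteq> {p}" by blast
    then show ?thesis by (intro card_le1) (use finX in auto)
  qed
  have "\<exists>w\<in>X. \<forall>c\<in>set C. w \<notin> D c"
  proof (rule count_avoid[OF finX _ cD])
    show "card (set C) \<le> k" using len card_length by metis
  qed (use cX in auto)
  then show ?thesis unfolding X_def D_def safe_def by auto
qed

lemma initL:
  assumes len: "length C = k"
  shows "\<exists>w\<in>Lns k. w \<notin> set C"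
proof (rule ccontr)
  assume "\<not> ?thesis"
  then have sub: "(\<lambda>b. Lx 0 b) ` {..<Nm k} \<subseteq> set C" by auto
  have "card ((\<lambda>b. Lx 0 b) ` {..<Nm k}) = Nm k" by (simp add: card_image inj_on_def)
  then have "Nm k \<le> card (set C)" using card_mono[OF _ sub] by simp
  also have "\<dots> \<le> k" using len card_length by metis
  moreover have "k \<le> k * k" by (rule le_square)
  ultimately show False unfolding Nm_def by simp
qed


definition hub :: "nat \<Rightarrow> nat" where "hub k = Mv (P 0 0) (P 1 0)"
definition oth :: "nat \<Rightarrow> nat" where "oth v = (if v = P 0 0 then P 1 0 else P 0 0)"
definition gg :: "nat \<Rightarrow> nat" where "gg v = Mv v (oth v)"

lemma Nm_ge1: "1 \<le> Nm k" unfolding Nm_def by simp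

lemma hub_Ms: "1 \<le> k \<Longrightarrow> hub k \<in> Ms k"
  unfolding hub_def using Nm_ge1[of k] by auto

lemma gg_Ms: "1 \<le> k \<Longrightarrow> v \<in> Pts k \<Longrightarrow> gg v \<in> Ms k \<and> GE k v (gg v) \<and> GE k (gg v) v"
  unfolding gg_def oth_def using Nm_ge1[of k] by (auto elim!: Pts_E)

lemma VV_sets: "Pts k \<subseteq> VV k" "Lns k \<subseteq> VV k" "Ms k \<subseteq> VV k" "VHH k \<subseteq> VV k"
  "Pts k \<subseteq> VHH k" "Ms k \<subseteq> VHH k"
  unfolding VV_def VHH_def by auto

lemma VV_mem: "u \<in> Pts k \<Longrightarrow> u \<in> VV k" "u \<in> Lns k \<Longrightarrow> u \<in> VV k" "u \<in> Ms k \<Longrightarrow> u \<in> VV k"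
  "u \<in> VHH k \<Longrightarrow> u \<in> VV k" "u \<in> Pts k \<Longrightarrow> u \<in> VHH k" "u \<in> Ms k \<Longrightarrow> u \<in> VHH k"
  unfolding VV_def VHH_def by auto

lemma VV_simps[simp]:
  "P x y \<in> VV k \<longleftrightarrow> x \<le> 2*k \<and> y < Nm k" "Lx a b \<in> VV k \<longleftrightarrow> a \<le> k \<and> b < Nm k"
  "Mv p q \<in> VV k \<longleftrightarrow> Mv p q \<in> Ms k"
  "P x y \<in> VHH k \<longleftrightarrow> x \<le> 2*k \<and> y < Nm k" "Lx a b \<notin> VHH k"
  "Mv p q \<in> VHH k \<longleftrightarrow> Mv p q \<in> Ms k"
  unfolding VV_def VHH_def by (auto simp del: mem_simps(3) simp add: mem_simps(1,2,4-9))

lemma Ms_adj: "u \<in> Ms k \<Longrightarrow> v \<in> Ms k \<Longrightarrow> u \<noteq> v \<Longrightarrow> GE k u v"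
  unfolding GE_def by blast

lemma reach_hub:
  fixes W :: "nat set" and R :: "nat \<Rightarrow> nat \<Rightarrow> bool"
  assumes k: "1 \<le> k" and W: "Pts k \<union> Ms k \<subseteq> W" and RGE: "\<And>u v. u \<in> W \<Longrightarrow> v \<in> W \<Longrightarrow> GE k u v \<Longrightarrow> R u v"
  shows "\<And>u. u \<in> Ms k \<Longrightarrow> R\<^sup>*\<^sup>* u (hub k)" "\<And>u. u \<in> Pts k \<Longrightarrow> R\<^sup>*\<^sup>* u (hub k)"
proof -
  show ms: "R\<^sup>*\<^sup>* u (hub k)" if "u \<in> Ms k" for u
  proof (cases "u = hub k")
    case True then show ?thesis by simp
  next
    case False
    then have "R u (hub k)" using RGE Ms_adj hub_Ms[OF k] that W by blast
    then show ?thesis by blast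
  qed
  fix u assume u: "u \<in> Pts k"
  then have "R u (gg u)" using gg_Ms[OF k u] RGE W by blast
  moreover have "R\<^sup>*\<^sup>* (gg u) (hub k)" using ms gg_Ms[OF k u] by blast
  ultimately show "R\<^sup>*\<^sup>* u (hub k)" by (rule converse_rtranclp_into_rtranclp)
qed

lemma conn_G: assumes k: "1 \<le> k" shows "connected_graph (VV k) (GE k)"
proof (rule conn_hub)
  show "finite (VV k)" unfolding VV_def using fin by auto
  show "hub k \<in> VV k" using hub_Ms[OF k] by (rule VV_mem)
  show "\<forall>x y. GE k x y \<longrightarrow> x \<in> VV k \<and> y \<in> VV k \<and> x \<noteq> y \<and> GE k y x"
    using GE_V GE_irr GE_sym by blast
  let ?R = "\<lambda>u v. GE k u v \<and> u \<in> VV k \<and> v \<in> VV k"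
  have W: "Pts k \<union> Ms k \<subseteq> VV k" using VV_sets by auto
  have h: "\<And>u. u \<in> Ms k \<Longrightarrow> ?R\<^sup>*\<^sup>* u (hub k)" "\<And>u. u \<in> Pts k \<Longrightarrow> ?R\<^sup>*\<^sup>* u (hub k)"
    using reach_hub[OF k W, of ?R] by auto
  show "\<forall>x\<in>VV k. ?R\<^sup>*\<^sup>* x (hub k)"
  proof
    fix x assume x: "x \<in> VV k"
    then show "?R\<^sup>*\<^sup>* x (hub k)"
    proof (rule V_cases)
      fix a b assume xab: "x = Lx a b" "a \<le> k" "b < Nm k"
      have "inc k 0 b a b" unfolding inc_def using xab by simp
      then have "?R x (P 0 b)" using xab x VV_sets by auto
      moreover have "?R\<^sup>*\<^sup>* (P 0 b) (hub k)" using h(2) xab by simp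
      ultimately show ?thesis by (rule converse_rtranclp_into_rtranclp)
    qed (use h in auto)
  qed
qed

lemma conn_H: assumes k: "1 \<le> k" shows "connected_graph (VHH k) (GEH k)"
proof (rule conn_hub)
  show "finite (VHH k)" unfolding VHH_def using fin by auto
  show "hub k \<in> VHH k" using hub_Ms[OF k] by (rule VV_mem)
  show "\<forall>x y. GEH k x y \<longrightarrow> x \<in> VHH k \<and> y \<in> VHH k \<and> x \<noteq> y \<and> GEH k y x"
    unfolding GEH_def using GE_irr GE_sym by blast
  let ?R = "\<lambda>u v. GEH k u v \<and> u \<in> VHH k \<and> v \<in> VHH k"
  have W: "Pts k \<union> Ms k \<subseteq> VHH k" using VV_sets by auto
  have h: "\<And>u. u \<in> Ms k \<Longrightarrow> ?R\<^sup>*\<^sup>* u (hub k)" "\<And>u. u \<in> Pts k \<Longrightarrow> ?R\<^sup>*\<^sup>* u (hub k)"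
    using reach_hub[OF k W, of ?R] unfolding GEH_def by auto
  show "\<forall>x\<in>VHH k. ?R\<^sup>*\<^sup>* x (hub k)"
  proof
    fix x assume "x \<in> VHH k"
    then have "x \<in> Pts k \<or> x \<in> Ms k" unfolding VHH_def by auto
    then show "?R\<^sup>*\<^sup>* x (hub k)" using h by blast
  qed
qed

lemma common_nb:
  assumes x: "x \<in> VHH k" and y: "y \<in> VHH k" and ne: "x \<noteq> y" and na: "\<not> GEH k x y"
  shows "\<exists>z\<in>VHH k. GEH k x z \<and> GEH k z y"
proof -
  have PM: "u \<in> VHH k \<Longrightarrow> u \<in> Pts k \<or> u \<in> Ms k" for u unfolding VHH_def by auto
  show ?thesis
  proof (cases "x \<in> Pts k")
    case xP: True
    show ?thesis
    proof (cases "y \<in> Pts k")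
      case True
      then have "Mv x y \<in> VHH k \<and> GEH k x (Mv x y) \<and> GEH k (Mv x y) y"
        using xP ne VV_sets unfolding GEH_def by (auto elim!: Pts_E)
      then show ?thesis by blast
    next
      case False
      then have yM: "y \<in> Ms k" using PM y by blast
      then obtain p q where yp: "y = Mv p q" "p \<in> Pts k" "q \<in> Pts k" "p \<noteq> q" by (elim Ms_E)
      have "x \<noteq> p" using na xP yp x y unfolding GEH_def by (auto elim!: Pts_E)
      then have "Mv x p \<in> VHH k \<and> GEH k x (Mv x p) \<and> GEH k (Mv x p) y"
        using xP yp x y VV_sets unfolding GEH_def by (auto elim!: Pts_E)
      then show ?thesis by blast
    qed
  next
    case False
    then have xM: "x \<in> Ms k" using PM x by blast
    then obtain p q where xp: "x = Mv p q" "p \<in> Pts k" "q \<in> Pts k" "p \<noteq> q" by (elim Ms_E)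
    show ?thesis
    proof (cases "y \<in> Pts k")
      case yP: True
      have "y \<noteq> p" using na yP xp x y unfolding GEH_def by (auto elim!: Pts_E)
      then have "Mv y p \<in> VHH k \<and> GEH k x (Mv y p) \<and> GEH k (Mv y p) y"
        using yP xp x y VV_sets unfolding GEH_def by (auto elim!: Pts_E)
      then show ?thesis by blast
    next
      case False
      then have "y \<in> Ms k" using PM y by blast
      then have "GEH k x y" using xM ne x y Ms_adj unfolding GEH_def by blast
      then show ?thesis using na by blast
    qed
  qed
qed

lemma iso: assumes k: "1 \<le> k" shows "isometric_subgraph (VV k) (GE k) (VHH k) (GEH k)"
  unfolding isometric_subgraph_def
proof (intro conjI ballI)
  show "connected_graph (VHH k) (GEH k)" by (rule conn_H[OF k])
  show "subgraph (VV k) (GE k) (VHH k) (GEH k)" unfolding subgraph_def GEH_def using VV_sets by auto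
  fix x y assume x: "x \<in> VHH k" and y: "y \<in> VHH k"
  have xV: "x \<in> VV k" using x by (rule VV_mem)
  have yV: "y \<in> VV k" using y by (rule VV_mem)
  show "gdist (VHH k) (GEH k) x y = gdist (VV k) (GE k) x y"
  proof (cases "x = y")
    case True then show ?thesis using gdist_0 x xV by metis
  next
    case ne: False
    show ?thesis
    proof (cases "GEH k x y")
      case adj: True
      then have g: "GE k x y" unfolding GEH_def by simp
      have "gdist (VHH k) (GEH k) x y = 1" using x y adj ne by (rule gdist_1)
      moreover have "gdist (VV k) (GE k) x y = 1" using xV yV g ne by (rule gdist_1)
      ultimately show ?thesis by simp
    next
      case nadj: False
      then have nG: "\<not> GE k x y" using x y unfolding GEH_def by simp
      obtain z where z: "z \<in> VHH k" "GEH k x z" "GEH k z y" using common_nb[OF x y ne nadj] by blast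
      have zV: "z \<in> VV k" using z(1) by (rule VV_mem)
      have g1: "GE k x z" and g2: "GE k z y" using z unfolding GEH_def by auto
      have "gdist (VHH k) (GEH k) x y = 2" using x y z(1) z(2) z(3) nadj ne by (rule gdist_2)
      moreover have "gdist (VV k) (GE k) x y = 2" using xV yV zV g1 g2 nG ne by (rule gdist_2)
      ultimately show ?thesis by simp
    qed
  qed
qed

lemma copnum: assumes k: "1 \<le> k" shows "cop_number (VHH k) (GEH k) = 1"
proof (rule cop_number_one[where M = "Ms k" and mz = "hub k" and g = gg])
  show "hub k \<in> Ms k" by (rule hub_Ms[OF k])
  show "Ms k \<subseteq> VHH k" by (rule VV_sets)
  show "GEH k x y" if "x \<in> Ms k" "y \<in> Ms k" "x \<noteq> y" for x y
    using that Ms_adj VV_sets unfolding GEH_def by blast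
  show "gg v \<in> Ms k \<and> GEH k (gg v) v" if "v \<in> VHH k" "v \<notin> Ms k" for v
  proof -
    have "v \<in> Pts k" using that unfolding VHH_def by auto
    then show ?thesis using gg_Ms[OF k] that VV_sets unfolding GEH_def by blast
  qed
  show "u \<in> Ms k" if "v \<in> VHH k" "v \<notin> Ms k" "GEH k v u" for v u
  proof -
    have vP: "v \<in> Pts k" using that unfolding VHH_def by auto
    have uH: "u \<in> VHH k" using that unfolding GEH_def by auto
    show ?thesis
    proof (rule ccontr)
      assume "u \<notin> Ms k"
      then have "u \<in> Pts k" using uH unfolding VHH_def by auto
      then show False using vP that(3) unfolding GEH_def by (auto elim!: Pts_E)
    qed
  qed
  show "u \<in> VHH k \<and> v \<in> VHH k" if "GEH k u v" for u v using that unfolding GEH_def by auto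
qed

lemma notguard: assumes k: "1 \<le> k" shows "\<not> guardable (VV k) (GE k) (VHH k) (GEH k) k"
proof (rule robber_wins[where VR = "Lns k" and VP = "Pts k"])
  show "Lns k \<subseteq> VV k" "Pts k \<subseteq> VV k" "Pts k \<subseteq> VHH k" using VV_sets by auto
  show "\<And>C. length C = k \<Longrightarrow> \<exists>w\<in>Lns k. w \<notin> set C" by (rule initL)
  show "\<And>w C. w \<in> Lns k \<Longrightarrow> length C = k \<Longrightarrow> \<forall>c\<in>set C. c \<noteq> w \<Longrightarrow> \<exists>v\<in>Pts k. GE k w v \<and> safe (GE k) C v"
    by (rule stepR)
  show "\<And>v C. v \<in> Pts k \<Longrightarrow> length C = k \<Longrightarrow> \<forall>c\<in>set C. c \<noteq> v \<Longrightarrow> \<exists>w\<in>Lns k. GE k v w \<and> safe (GE k) C w"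
    by (rule stepP)
qed

theorem theorem3p1:
  fixes k :: nat
  assumes "k \<ge> 3"
  shows "\<exists>(V :: nat set) E (VH :: nat set) EH.
           connected_graph V E \<and> isometric_subgraph V E VH EH \<and>
           cop_number VH EH = 1 \<and> \<not> guardable V E VH EH k"
proof -
  have k: "1 \<le> k" using assms by simp
  show ?thesis using conn_G[OF k] iso[OF k] copnum[OF k] notguard[OF k] by blast
qed

end
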